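(* Let $\operatorname{pend}(n)$ denote the number of partitions of $n$ in which no even part appears exactly once (i.e., each even part size that occurs has multiplicity at least $2$; odd parts are unrestricted), and let $\operatorname{pond}(n)$ denote the number of partitions of $n$ in which no odd part appears exactly once (i.e., each odd part size that occurs has multiplicity at least $2$; even parts are unrestricted). Then, as formal power series in $q$, $$\sum_{n\ge 0}(-1)^n \operatorname{pend}(n)q^n=\frac{f_1f_{12}}{f_2^2f_6},\qquad \sum_{n\ge 0}(-1)^n \operatorname{pond}(n)q^n=\frac{f_3f_4}{f_2^2f_6}.$$
   Context: For a positive integer $r$, $f_r:=(q^r;q^r)_\infty=\prod_{k\ge1}(1-q^{rk})$. By convention $\operatorname{pend}(0)=\operatorname{pond}(0)=1$. *)

theory Defs
  imports "HOL-Library.Multiset" "HOL-Computational_Algebra.Formal_Power_Series"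
begin

definition partitions :: "nat \<Rightarrow> nat multiset set" where
  "partitions n = {M. (\<forall>x\<in>#M. 0 < x) \<and> sum_mset M = n}"

definition pend :: "nat \<Rightarrow> nat" where
  "pend n = card {M \<in> partitions n. \<forall>k. even k \<longrightarrow> count M k \<noteq> 1}"

definition pond :: "nat \<Rightarrow> nat" where
  "pond n = card {M \<in> partitions n. \<forall>k. odd k \<longrightarrow> count M k \<noteq> 1}"

text \<open>f_r = prod_{k>=1} (1 - q^(r k)) as a formal power series: its N-th coefficient
  is the N-th coefficient of the finite product over k = 1..N (the remaining factors
  do not affect coefficients of degree at most N when r >= 1).\<close>
definition fq :: "nat \<Rightarrow> real fps" where
  "fq r = Abs_fps (\<lambda>N. fps_nth (\<Prod>k\<in>{1..N}. (1 - fps_X ^ (r * k))) N)"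

end

theory Submission
  imports Defs
begin


notation fps_nth (infixl "\<diamond>" 75)


definition Pf :: "(nat \<Rightarrow> real fps) \<Rightarrow> nat \<Rightarrow> real fps" where
  "Pf h M = (\<Prod>k\<in>{1..M}. h k)"

definition good :: "(nat \<Rightarrow> real fps) \<Rightarrow> bool" where
  "good h \<longleftrightarrow> (\<forall>k\<ge>1. h k \<diamond> 0 = 1 \<and> (\<forall>i. 0 < i \<longrightarrow> i < k \<longrightarrow> h k \<diamond> i = 0))"

definition PP :: "(nat \<Rightarrow> real fps) \<Rightarrow> real fps" where
  "PP h = Abs_fps (\<lambda>n. Pf h n \<diamond> n)"

lemma Pf_Suc: "Pf h (Suc M) = Pf h M * h (Suc M)"
  unfolding Pf_def by (simp add: prod.nat_ivl_Suc' mult.commute)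

lemma mult_near1:
  fixes A g :: "real fps"
  assumes "g \<diamond> 0 = 1" "\<And>j. 0 < j \<Longrightarrow> j \<le> n \<Longrightarrow> g \<diamond> j = 0"
  shows "(A * g) \<diamond> n = A \<diamond> n"
proof -
  have "(A * g) \<diamond> n = (\<Sum>i=0..n. A \<diamond> i * g \<diamond> (n - i))" by (rule fps_mult_nth)
  also have "\<dots> = (\<Sum>i=0..n. if i = n then A \<diamond> n else 0)"
    by (rule sum.cong) (use assms in auto)
  finally show ?thesis by simp
qed

lemma stab:
  assumes "good h" "n \<le> M"
  shows "Pf h M \<diamond> n = Pf h n \<diamond> n"
  using assms(2)
proof (induction M rule: dec_induct)
  case base then show ?case by simp
next
  case (step m)
  have "Pf h (Suc m) \<diamond> n = (Pf h m * h (Suc m)) \<diamond> n" by (simp add: Pf_Suc)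
  also have "\<dots> = Pf h m \<diamond> n"
    by (rule mult_near1) (use assms(1) step(1) in \<open>auto simp: good_def\<close>)
  finally show ?case using step by simp
qed

lemma PP_nth: "good h \<Longrightarrow> n \<le> M \<Longrightarrow> PP h \<diamond> n = Pf h M \<diamond> n"
proof -
  assume a: "good h" "n \<le> M"
  have "PP h \<diamond> n = Pf h n \<diamond> n" by (simp add: PP_def)
  then show ?thesis using stab[OF a] by simp
qed

lemma PP_0 [simp]: "PP h \<diamond> 0 = 1"
  unfolding PP_def Pf_def by simp

lemma PP_mult:
  assumes "good h" "good g"
  shows "PP h * PP g = PP (\<lambda>k. h k * g k)"
proof (rule fps_ext)
  fix n
  have "(PP h * PP g) \<diamond> n = (\<Sum>i=0..n. PP h \<diamond> i * PP g \<diamond> (n - i))" by (rule fps_mult_nth)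
  also have "\<dots> = (\<Sum>i=0..n. Pf h n \<diamond> i * Pf g n \<diamond> (n - i))"
    by (rule sum.cong) (use assms PP_nth in auto)
  also have "\<dots> = (Pf h n * Pf g n) \<diamond> n" by (simp add: fps_mult_nth)
  also have "Pf h n * Pf g n = Pf (\<lambda>k. h k * g k) n" by (simp add: Pf_def prod.distrib)
  finally show "(PP h * PP g) \<diamond> n = PP (\<lambda>k. h k * g k) \<diamond> n" by (simp add: PP_def)
qed

lemma good_mult:
  assumes "good h" "good g"
  shows "good (\<lambda>k. h k * g k)"
  unfolding good_def
proof (intro allI impI conjI)
  fix k i :: nat assume k: "k \<ge> 1" 
  show "(h k * g k) \<diamond> 0 = 1" using assms k by (simp add: good_def)
  assume i: "0 < i" "i < k"
  have "(h k * g k) \<diamond> i = (\<Sum>j=0..i. h k \<diamond> j * g k \<diamond> (i - j))" by (rule fps_mult_nth)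
  also have "\<dots> = 0"
  proof (rule sum.neutral, rule ballI)
    fix j assume "j \<in> {0..i}"
    then show "h k \<diamond> j * g k \<diamond> (i - j) = 0"
      using assms k i by (cases "j = 0") (auto simp: good_def)
  qed
  finally show "(h k * g k) \<diamond> i = 0" .
qed

lemma PP_cong:
  assumes "\<And>k. k \<ge> 1 \<Longrightarrow> h k = g k" shows "PP h = PP g"
proof -
  have "Pf h M = Pf g M" for M unfolding Pf_def by (rule prod.cong) (use assms in auto)
  then show ?thesis by (simp add: PP_def)
qed

lemma Pf_reindex2: "Pf (\<lambda>k. if even k then h k else 1) (2 * n) = Pf (\<lambda>j. h (2 * j)) n"
proof (induction n)
  case 0 then show ?case by (simp add: Pf_def)
next
  case (Suc n)
  have "2 * Suc n = Suc (Suc (2 * n))" by simp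
  then show ?case using Suc by (simp add: Pf_Suc)
qed

lemma PP_reindex2:
  assumes "good (\<lambda>k. if even k then h k else 1)" "good (\<lambda>j. h (2 * j))"
  shows "PP (\<lambda>j. h (2 * j)) = PP (\<lambda>k. if even k then h k else 1)"
proof (rule fps_ext)
  fix n
  have "PP (\<lambda>k. if even k then h k else 1) \<diamond> n = Pf (\<lambda>k. if even k then h k else 1) (2 * n) \<diamond> n"
    by (rule PP_nth[OF assms(1)]) simp
  also have "\<dots> = Pf (\<lambda>j. h (2 * j)) n \<diamond> n" by (simp add: Pf_reindex2)
  finally show "PP (\<lambda>j. h (2 * j)) \<diamond> n = PP (\<lambda>k. if even k then h k else 1) \<diamond> n"
    by (simp add: PP_def)
qed

lemma fq_Pi: "fq r = PP (\<lambda>k. 1 - fps_X ^ (r * k))"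
  unfolding fq_def PP_def Pf_def by simp

lemma good_if: "good h \<Longrightarrow> good (\<lambda>k. if P k then h k else 1)"
  unfolding good_def by auto

lemma good_X: "r \<ge> 1 \<Longrightarrow> good (\<lambda>k. 1 - fps_X ^ (r * k))"
  unfolding good_def by auto

lemma good_Xp: "r \<ge> 1 \<Longrightarrow> good (\<lambda>k. 1 + fps_X ^ (r * k))"
  unfolding good_def by auto

definition negf :: "real fps \<Rightarrow> real fps" where
  "negf a = Abs_fps (\<lambda>n. (-1) ^ n * a \<diamond> n)"

lemma negf_mult: "negf (a * b) = negf a * negf b"
proof (rule fps_ext)
  fix n
  have "negf (a * b) \<diamond> n = (\<Sum>i=0..n. (-1) ^ n * (a \<diamond> i * b \<diamond> (n - i)))"
    by (simp add: negf_def fps_mult_nth sum_distrib_left)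
  also have "\<dots> = (\<Sum>i=0..n. ((-1) ^ i * a \<diamond> i) * ((-1) ^ (n - i) * b \<diamond> (n - i)))"
  proof (rule sum.cong)
    fix i assume "i \<in> {0..n}"
    then have "n = i + (n - i)" by simp
    then have "(-1::real) ^ n = (-1) ^ i * (-1) ^ (n - i)"
      by (metis power_add)
    then show "(-1) ^ n * (a \<diamond> i * b \<diamond> (n - i)) = ((-1) ^ i * a \<diamond> i) * ((-1) ^ (n - i) * b \<diamond> (n - i))"
      by simp
  qed simp
  also have "\<dots> = (negf a * negf b) \<diamond> n" by (simp add: negf_def fps_mult_nth)
  finally show "negf (a * b) \<diamond> n = (negf a * negf b) \<diamond> n" .
qed

lemma negf_1: "negf 1 = 1"
  by (rule fps_ext) (simp add: negf_def)

lemma negf_prod: "negf (\<Prod>k\<in>A. h k) = (\<Prod>k\<in>A. negf (h k))"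
  by (induction A rule: infinite_finite_induct) (auto simp: negf_1 negf_mult)

lemma negf_Pi: "negf (PP h) = PP (\<lambda>k. negf (h k))"
proof (rule fps_ext)
  fix n
  have "negf (PP h) \<diamond> n = negf (Pf h n) \<diamond> n" by (simp add: negf_def PP_def)
  also have "negf (Pf h n) = Pf (\<lambda>k. negf (h k)) n" by (simp add: Pf_def negf_prod)
  finally show "negf (PP h) \<diamond> n = PP (\<lambda>k. negf (h k)) \<diamond> n" by (simp add: PP_def)
qed



lemma negf_X: "negf (fps_X ^ m) = (if even m then fps_X ^ m else - (fps_X ^ m))"
proof (rule fps_ext)
  fix n
  show "negf (fps_X ^ m) \<diamond> n = (if even m then fps_X ^ m else - (fps_X ^ m)) \<diamond> n"
    by (cases "n = m") (simp_all add: negf_def)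
qed

lemma negf_add: "negf (a + b) = negf a + negf b"
  by (rule fps_ext) (simp add: negf_def algebra_simps)

lemma negf_diff: "negf (a - b) = negf a - negf b"
  by (rule fps_ext) (simp add: negf_def algebra_simps)

lemma negf_1mX: "negf (1 - fps_X ^ m) = (if even m then 1 - fps_X ^ m else 1 + fps_X ^ m)"
  by (simp add: negf_diff negf_1 negf_X)

lemma negf_if1: "negf (if P then a else 1) = (if P then negf a else 1)"
  by (simp add: negf_1)



definition gS :: "(nat \<Rightarrow> nat set) \<Rightarrow> nat \<Rightarrow> real fps" where
  "gS S k = Abs_fps (\<lambda>i. if k dvd i \<and> i div k \<in> S k then 1 else 0)"

definition T :: "(nat \<Rightarrow> nat set) \<Rightarrow> nat \<Rightarrow> nat \<Rightarrow> nat multiset set" where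
  "T S M n = {A. set_mset A \<subseteq> {1..M} \<and> (\<forall>k. count A k \<in> S k) \<and> sum_mset A = n}"

lemma T_0:
  assumes "\<forall>k. 0 \<in> S k"
  shows "T S 0 n = (if n = 0 then {{#}} else {})"
  using assms by (auto simp: T_def)

lemma T_Suc:
  assumes S0: "\<forall>k. 0 \<in> S k"
  shows "T S (Suc M) n = (\<Union>j\<in>{j. j \<in> S (Suc M) \<and> j * Suc M \<le> n}.
            (\<lambda>B. B + replicate_mset j (Suc M)) ` T S M (n - j * Suc M))"
  (is "?L = ?R")
proof
  show "?L \<subseteq> ?R"
  proof
    fix A assume A: "A \<in> ?L"
    define j where "j = count A (Suc M)"
    define B where "B = filter_mset (\<lambda>x. x \<noteq> Suc M) A"
    have AB: "A = B + replicate_mset j (Suc M)"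
      unfolding B_def j_def by (rule multiset_eqI) auto
    have sA: "sum_mset A = sum_mset B + j * Suc M"
      by (subst AB) simp
    have jS: "j \<in> S (Suc M)" using A by (auto simp: T_def j_def)
    have jn: "j * Suc M \<le> n" using A sA by (auto simp: T_def)
    have "B \<in> T S M (n - j * Suc M)"
      unfolding T_def
    proof (intro CollectI conjI allI)
      show "set_mset B \<subseteq> {1..M}"
        using A by (auto simp: T_def B_def less_Suc_eq_le)
      fix k show "count B k \<in> S k"
        using A S0 by (auto simp: T_def B_def)
    next
      show "sum_mset B = n - j * Suc M" using A sA by (auto simp: T_def)
    qed
    then show "A \<in> ?R" using AB jS jn by blast
  qed
next
  show "?R \<subseteq> ?L"
  proof
    fix A assume "A \<in> ?R"
    then obtain j B where jS: "j \<in> S (Suc M)" and jn: "j * Suc M \<le> n"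
      and B: "B \<in> T S M (n - j * Suc M)" and AB: "A = B + replicate_mset j (Suc M)"
      by blast
    have nB: "count B (Suc M) = 0" using B by (auto simp: T_def count_eq_zero_iff)
    show "A \<in> ?L"
      unfolding T_def
    proof (intro CollectI conjI allI)
      show "set_mset A \<subseteq> {1..Suc M}" using B AB by (auto simp: T_def)
      fix k show "count A k \<in> S k"
        using B AB nB jS by (cases "k = Suc M") (auto simp: T_def)
    next
      show "sum_mset A = n" using B AB jn by (auto simp: T_def)
    qed
  qed
qed

lemma T_card:
  assumes S0: "\<forall>k. 0 \<in> S k"
  shows "finite (T S M n) \<and> Pf (gS S) M \<diamond> n = real (card (T S M n))"
proof (induction M arbitrary: n)
  case 0
  show ?case using S0 by (simp add: T_0 Pf_def)
next
  case (Suc M)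
  define J where "J = {j. j \<in> S (Suc M) \<and> j * Suc M \<le> n}"
  define img where "img j = (\<lambda>B. B + replicate_mset j (Suc M)) ` T S M (n - j * Suc M)" for j
  have TS: "T S (Suc M) n = (\<Union>j\<in>J. img j)"
    unfolding J_def img_def by (rule T_Suc[OF S0])
  have Jsub: "J \<subseteq> {0..n}"
  proof
    fix j assume "j \<in> J"
    then have "j * Suc M \<le> n" by (simp add: J_def)
    moreover have "j \<le> j * Suc M" by simp
    ultimately show "j \<in> {0..n}" by simp
  qed
  have finJ: "finite J" using Jsub finite_subset by blast
  have finimg: "finite (img j)" for j using Suc.IH unfolding img_def by blast
  have cardimg: "card (img j) = card (T S M (n - j * Suc M))" for j
    unfolding img_def by (rule card_image) (auto simp: inj_on_def)
  have disj: "img i \<inter> img j = {}" if "i \<noteq> j" for i j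
  proof (rule ccontr)
    assume "img i \<inter> img j \<noteq> {}"
    then obtain B B' where B: "B \<in> T S M (n - i * Suc M)" and B': "B' \<in> T S M (n - j * Suc M)"
      and eq: "B + replicate_mset i (Suc M) = B' + replicate_mset j (Suc M)"
      unfolding img_def by blast
    have "count B (Suc M) = 0" "count B' (Suc M) = 0"
      using B B' by (auto simp: T_def count_eq_zero_iff)
    moreover have "count (B + replicate_mset i (Suc M)) (Suc M) = count (B' + replicate_mset j (Suc M)) (Suc M)"
      using eq by simp
    ultimately show False using that by simp
  qed
  have fin: "finite (T S (Suc M) n)" using TS finJ finimg by simp
  have card: "card (T S (Suc M) n) = (\<Sum>j\<in>J. card (T S M (n - j * Suc M)))"
    unfolding TS by (subst card_UN_disjoint) (use finJ finimg disj cardimg in auto)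
  define P where "P = Pf (gS S) M"
  define I where "I = (\<lambda>j. j * Suc M) ` J"
  have "Pf (gS S) (Suc M) \<diamond> n = (gS S (Suc M) * P) \<diamond> n"
    by (simp add: Pf_Suc P_def mult.commute)
  also have "\<dots> = (\<Sum>i=0..n. gS S (Suc M) \<diamond> i * P \<diamond> (n - i))" by (rule fps_mult_nth)
  also have "\<dots> = (\<Sum>i\<in>I. gS S (Suc M) \<diamond> i * P \<diamond> (n - i))"
  proof (rule sum.mono_neutral_right)
    show "I \<subseteq> {0..n}" unfolding I_def J_def by auto
    show "\<forall>i\<in>{0..n} - I. gS S (Suc M) \<diamond> i * P \<diamond> (n - i) = 0"
    proof
      fix i assume i: "i \<in> {0..n} - I"
      have "\<not> (Suc M dvd i \<and> i div Suc M \<in> S (Suc M))"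
      proof
        assume h: "Suc M dvd i \<and> i div Suc M \<in> S (Suc M)"
        then have "i = (i div Suc M) * Suc M" by (metis dvd_div_mult_self)
        then have "i \<in> I" using h i unfolding I_def J_def
          by (metis (mono_tags, lifting) Diff_iff atLeastAtMost_iff image_eqI mem_Collect_eq)
        then show False using i by simp
      qed
      then show "gS S (Suc M) \<diamond> i * P \<diamond> (n - i) = 0" by (auto simp: gS_def)
    qed
  qed simp
  also have "\<dots> = (\<Sum>i\<in>I. P \<diamond> (n - i))"
  proof (rule sum.cong)
    fix i assume "i \<in> I"
    then obtain j where j: "j \<in> J" "i = j * Suc M" by (auto simp: I_def)
    have d: "Suc M dvd i" using j(2) by (metis dvd_triv_right)
    have q: "i div Suc M = j" using j(2) by (metis nonzero_mult_div_cancel_right Zero_not_Suc)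
    have "j \<in> S (Suc M)" using j(1) by (simp add: J_def)
    then show "gS S (Suc M) \<diamond> i * P \<diamond> (n - i) = P \<diamond> (n - i)"
      using d q by (simp add: gS_def)
  qed simp
  also have "\<dots> = (\<Sum>j\<in>J. P \<diamond> (n - j * Suc M))"
  proof -
    have inj: "inj_on (\<lambda>j. j * Suc M) J" by (rule inj_onI) (metis Zero_not_Suc mult_cancel2)
    show ?thesis unfolding I_def using sum.reindex[OF inj, of "\<lambda>i. P \<diamond> (n - i)"] by (simp add: comp_def)
  qed
  also have "\<dots> = (\<Sum>j\<in>J. real (card (T S M (n - j * Suc M))))"
  proof -
    have IH2: "Pf (gS S) M \<diamond> m = real (card (T S M m))" for m by (rule conjunct2[OF Suc.IH[of m]])
    show ?thesis by (simp only: P_def IH2)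
  qed
  also have "\<dots> = real (card (T S (Suc M) n))" by (simp add: card)
  finally have "Pf (gS S) (Suc M) \<diamond> n = real (card (T S (Suc M) n))" .
  with fin show ?case by (rule conjI)
qed

lemma good_gS:
  assumes S0: "\<forall>k. 0 \<in> S k"
  shows "good (gS S)"
  unfolding good_def
proof (intro allI impI conjI)
  fix k :: nat
  show "gS S k \<diamond> 0 = 1" using S0 by (simp add: gS_def)
  fix i assume "0 < i" "i < k"
  then have "\<not> k dvd i" by (meson dvd_imp_le not_le)
  then show "gS S k \<diamond> i = 0" by (simp add: gS_def)
qed

lemma mem_le_sum_mset:
  assumes "x \<in># (A :: nat multiset)"
  shows "x \<le> sum_mset A"
proof -
  obtain B where "A = add_mset x B" using multi_member_split[OF assms] by blast
  then show ?thesis by simp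
qed

lemma count_gen:
  assumes S0: "\<forall>k. 0 \<in> S k"
  shows "{A \<in> partitions n. \<forall>k. count A k \<in> S k} = T S n n"
proof (intro equalityI subsetI)
  fix A assume "A \<in> {A \<in> partitions n. \<forall>k. count A k \<in> S k}"
  then have p: "\<forall>x\<in>#A. 0 < x" "sum_mset A = n" "\<forall>k. count A k \<in> S k"
    by (simp_all add: partitions_def)
  have "set_mset A \<subseteq> {1..n}"
  proof
    fix x assume x: "x \<in># A"
    then have "0 < x" using p(1) by blast
    moreover have "x \<le> n" using mem_le_sum_mset[OF x] p(2) by simp
    ultimately show "x \<in> {1..n}" by simp
  qed
  then show "A \<in> T S n n" using p by (simp add: T_def)
next
  fix A assume "A \<in> T S n n"
  then have p: "set_mset A \<subseteq> {1..n}" "sum_mset A = n" "\<forall>k. count A k \<in> S k"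
    by (simp_all add: T_def)
  have "\<forall>x\<in>#A. 0 < x"
  proof
    fix x assume "x \<in># A"
    then have "x \<in> {1..n}" using p(1) by blast
    then show "0 < x" by simp
  qed
  then show "A \<in> {A \<in> partitions n. \<forall>k. count A k \<in> S k}" using p by (simp add: partitions_def)
qed

lemma PP_gS:
  assumes S0: "\<forall>k. 0 \<in> S k"
  shows "PP (gS S) = Abs_fps (\<lambda>n. real (card {A \<in> partitions n. \<forall>k. count A k \<in> S k}))"
proof (rule fps_ext)
  fix n
  have "PP (gS S) \<diamond> n = Pf (gS S) n \<diamond> n" by (simp add: PP_def)
  also have "\<dots> = real (card (T S n n))" by (rule conjunct2[OF T_card[OF S0]])
  also have "T S n n = {A \<in> partitions n. \<forall>k. count A k \<in> S k}" by (rule count_gen[OF S0, symmetric])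
  finally show "PP (gS S) \<diamond> n = Abs_fps (\<lambda>n. real (card {A \<in> partitions n. \<forall>k. count A k \<in> S k})) \<diamond> n"
    by simp
qed



definition u :: "nat \<Rightarrow> real fps" where
  "u k = Abs_fps (\<lambda>i. if k dvd i then 1 else 0)"

lemma u_inv:
  assumes k: "k \<ge> 1"
  shows "u k * (1 - fps_X ^ k) = 1"
proof (rule fps_ext)
  fix i
  have "(u k * (1 - fps_X ^ k)) \<diamond> i = u k \<diamond> i - (u k * fps_X ^ k) \<diamond> i"
    by (simp add: right_diff_distrib)
  also have "\<dots> = 1 \<diamond> i"
  proof (cases "i < k")
    case True
    then show ?thesis using k by (auto simp: u_def fps_X_power_mult_right_nth dest: dvd_imp_le)
  next
    case False
    then have "i = (i - k) + k" by simp
    then have "k dvd i \<longleftrightarrow> k dvd (i - k)" by (metis dvd_add_left_iff dvd_refl)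
    then show ?thesis using False k by (simp add: u_def fps_X_power_mult_right_nth)
  qed
  finally show "(u k * (1 - fps_X ^ k)) \<diamond> i = 1 \<diamond> i" .
qed

lemma gS_full: "S k = UNIV \<Longrightarrow> gS S k = u k"
  by (simp add: gS_def u_def)

lemma gS_no1:
  assumes "k \<ge> 1" "S k = {j. j \<noteq> 1}"
  shows "gS S k = u k - fps_X ^ k"
proof (rule fps_ext)
  fix i
  have "(k dvd i \<and> i div k = 1) \<longleftrightarrow> i = k" using assms(1) by auto
  then show "gS S k \<diamond> i = (u k - fps_X ^ k) \<diamond> i"
    using assms by (auto simp: gS_def u_def)
qed

lemma ring6:
  fixes a x :: "'a :: comm_ring_1"
  assumes "a * (1 - x) = 1"
  shows "(a - x) * (1 - x ^ 2) * (1 - x ^ 3) = 1 - x ^ 6"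
proof -
  have "(a - x) * (1 - x ^ 2) * (1 - x ^ 3) = (a * (1 - x)) * ((1 + x) * (1 - x ^ 3)) - x * (1 - x ^ 2) * (1 - x ^ 3)"
    by (simp add: algebra_simps power2_eq_square power3_eq_cube)
  also have "\<dots> = (1 + x) * (1 - x ^ 3) - x * (1 - x ^ 2) * (1 - x ^ 3)" using assms by simp
  also have "\<dots> = (1 - x ^ 3) * (1 + x ^ 3)"
    by (simp add: algebra_simps power2_eq_square power3_eq_cube)
  also have "\<dots> = 1 - x ^ 6"
    by (simp add: algebra_simps power_add[symmetric])
  finally show ?thesis .
qed

lemma Xpow: "(fps_X :: real fps) ^ (r * k) = (fps_X ^ k) ^ r"
  by (simp add: power_mult[symmetric] mult.commute)

lemma fq_even:
  assumes "r \<ge> 1"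
  shows "fq (2 * r) = PP (\<lambda>k. if even k then 1 - fps_X ^ (r * k) else 1)"
proof -
  have "fq (2 * r) = PP (\<lambda>j. (\<lambda>k. 1 - fps_X ^ (r * k)) (2 * j))"
    unfolding fq_Pi by (rule PP_cong) (simp add: mult.commute mult.left_commute)
  also have "\<dots> = PP (\<lambda>k. if even k then (\<lambda>k. 1 - fps_X ^ (r * k)) k else 1)"
  proof (rule PP_reindex2)
    show "good (\<lambda>k. if even k then 1 - fps_X ^ (r * k) else 1)"
      by (rule good_if, rule good_X[OF assms])
    have "good (\<lambda>k. 1 - fps_X ^ ((2 * r) * k))" by (rule good_X) (use assms in simp)
    then show "good (\<lambda>j. 1 - fps_X ^ (r * (2 * j)))"
      by (simp add: mult.commute mult.left_commute)
  qed
  finally show ?thesis by simp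
qed

lemma fq_0: "fq r \<diamond> 0 = 1"
  by (simp add: fq_Pi)

lemma divI:
  fixes a b c :: "real fps"
  assumes "b \<diamond> 0 \<noteq> 0" "a * b = c"
  shows "a = c / b"
proof -
  have "c / b = c * inverse b" by (rule fps_divide_unit) (use assms in simp)
  also have "\<dots> = a * (b * inverse b)" using assms(2) by (simp add: mult.assoc)
  also have "b * inverse b = 1" by (rule inverse_mult_eq_1') (use assms in simp)
  finally show ?thesis by simp
qed

abbreviation X :: "real fps" where "X \<equiv> fps_X"

lemma good_odd1: "good (\<lambda>k. if odd k then 1 - X ^ (1 * k) else 1)"
  by (rule good_if, rule good_X) simp
lemma good_oddp1: "good (\<lambda>k. if odd k then 1 + X ^ (1 * k) else 1)"
  by (rule good_if, rule good_Xp) simp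
lemma good_evn: "r \<ge> 1 \<Longrightarrow> good (\<lambda>k. if even k then 1 - X ^ (r * k) else 1)"
  by (rule good_if, rule good_X)
lemma good_oddn: "r \<ge> 1 \<Longrightarrow> good (\<lambda>k. if odd k then 1 - X ^ (r * k) else 1)"
  by (rule good_if, rule good_X)
lemma good_oddpn: "r \<ge> 1 \<Longrightarrow> good (\<lambda>k. if odd k then 1 + X ^ (r * k) else 1)"
  by (rule good_if, rule good_Xp)

lemma E_f4: "PP (\<lambda>k. if odd k then 1 - X ^ (2 * k) else 1) * fq 4 = fq 2"
proof -
  have "fq 4 = fq (2 * 2)" by simp
  also have "\<dots> = PP (\<lambda>k. if even k then 1 - X ^ (2 * k) else 1)" by (rule fq_even) simp
  finally have f4: "fq 4 = \<dots>" .
  show ?thesis unfolding f4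
    by (subst PP_mult) (auto intro: good_evn good_oddn simp: fq_Pi intro!: PP_cong)
qed

lemma C_f2: "PP (\<lambda>k. if odd k then 1 - X ^ (1 * k) else 1) * fq 2 = fq 1"
proof -
  have "fq 2 = fq (2 * 1)" by simp
  also have "\<dots> = PP (\<lambda>k. if even k then 1 - X ^ (1 * k) else 1)" by (rule fq_even) simp
  finally have f2: "fq 2 = \<dots>" .
  show ?thesis unfolding f2
    by (subst PP_mult) (auto intro: good_evn good_oddn simp: fq_Pi intro!: PP_cong)
qed

lemma BC_pend: "PP (\<lambda>k. if odd k then 1 + X ^ (1 * k) else 1) * PP (\<lambda>k. if odd k then 1 - X ^ (1 * k) else 1)
   = PP (\<lambda>k. if odd k then 1 - X ^ (2 * k) else 1)"
  by (subst PP_mult) (auto intro: good_oddpn good_oddn intro!: PP_cong simp: algebra_simps power_mult[symmetric] power2_eq_square power_add[symmetric] mult_2)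



lemma PP4:
  assumes "good f1" "good f2" "good f3" "good f4"
  shows "PP f1 * PP f2 * PP f3 * PP f4 = PP (\<lambda>k. f1 k * f2 k * f3 k * f4 k)"
proof -
  have g12: "good (\<lambda>k. f1 k * f2 k)" by (rule good_mult[OF assms(1,2)])
  have g123: "good (\<lambda>k. f1 k * f2 k * f3 k)" by (rule good_mult[OF g12 assms(3)])
  have "PP f1 * PP f2 * PP f3 * PP f4 = PP (\<lambda>k. f1 k * f2 k) * PP f3 * PP f4"
    using PP_mult[OF assms(1,2)] by simp
  also have "\<dots> = PP (\<lambda>k. f1 k * f2 k * f3 k) * PP f4"
    using PP_mult[OF g12 assms(3)] by simp
  also have "\<dots> = PP (\<lambda>k. f1 k * f2 k * f3 k * f4 k)"
    using PP_mult[OF g123 assms(4)] by simp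
  finally show ?thesis .
qed

lemma odd_even_r:
  assumes r: "r \<ge> 1"
  shows "PP (\<lambda>k. if odd k then 1 - X ^ (r * k) else 1) * fq (2 * r) = fq r"
proof -
  have "PP (\<lambda>k. if odd k then 1 - X ^ (r * k) else 1) * fq (2 * r)
      = PP (\<lambda>k. if odd k then 1 - X ^ (r * k) else 1) * PP (\<lambda>k. if even k then 1 - X ^ (r * k) else 1)"
    using fq_even[OF r] by simp
  also have "\<dots> = PP (\<lambda>k. (if odd k then 1 - X ^ (r * k) else 1) * (if even k then 1 - X ^ (r * k) else 1))"
    by (rule PP_mult[OF good_oddn[OF r] good_evn[OF r]])
  also have "\<dots> = PP (\<lambda>k. 1 - X ^ (r * k))"
    by (rule PP_cong) simp
  finally show ?thesis by (simp add: fq_Pi)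
qed

lemma BC_r:
  assumes r: "r \<ge> 1" and r2: "r2 = 2 * r"
  shows "PP (\<lambda>k. if odd k then 1 + X ^ (r * k) else 1) * PP (\<lambda>k. if odd k then 1 - X ^ (r * k) else 1)
     = PP (\<lambda>k. if odd k then 1 - X ^ (r2 * k) else 1)"
proof -
  have "PP (\<lambda>k. if odd k then 1 + X ^ (r * k) else 1) * PP (\<lambda>k. if odd k then 1 - X ^ (r * k) else 1)
     = PP (\<lambda>k. (if odd k then 1 + X ^ (r * k) else 1) * (if odd k then 1 - X ^ (r * k) else 1))"
    by (rule PP_mult[OF good_oddpn[OF r] good_oddn[OF r]])
  also have "\<dots> = PP (\<lambda>k. if odd k then 1 - X ^ (r2 * k) else 1)"
  proof (rule PP_cong)
    fix k :: nat
    have "X ^ (r2 * k) = X ^ (r * k) * X ^ (r * k)" by (simp add: r2 power_add[symmetric] mult_2 add_mult_distrib)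
    then show "(if odd k then 1 + X ^ (r * k) else 1) * (if odd k then 1 - X ^ (r * k) else 1)
      = (if odd k then 1 - X ^ (r2 * k) else 1)" by (simp add: algebra_simps)
  qed
  finally show ?thesis .
qed

lemma ring_pend:
  fixes nP B C E f1 f2 f4 f6 f12 :: "'a::comm_ring_1"
  assumes h1: "nP * B * f4 * f6 = f12" and h2: "B * C = E" and h3: "E * f4 = f2" and h4: "C * f2 = f1"
  shows "nP * f2 ^ 2 * f6 = f1 * f12"
proof -
  have f2e: "B * C * f4 = f2" using h2 h3 by simp
  have "nP * f2 ^ 2 * f6 = nP * (B * C * f4) * f2 * f6" by (simp add: f2e power2_eq_square)
  also have "\<dots> = (nP * B * f4 * f6) * (C * f2)" by (simp add: ac_simps)
  also have "\<dots> = f12 * f1" by (simp only: h1 h4)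
  finally show ?thesis by (simp only: mult.commute)
qed

lemma ring_pond:
  fixes nQ A B C D f2 f3 f4 f6 f12 :: "'a::idom"
  assumes h1: "nQ * f2 * A * B = D" and h2: "A * f4 = f2" and h3: "B * C = D"
    and h4: "C * f6 = f3" and h5: "D * f12 = f6" and nz: "A * B * C * f12 \<noteq> 0"
  shows "nQ * f2 ^ 2 * f6 = f3 * f4"
proof -
  have "(nQ * f2 ^ 2 * f6) * (A * B * C * f12) = (nQ * f2 * A * B) * f2 * (C * f6) * f12"
    by (simp add: ac_simps power2_eq_square)
  also have "\<dots> = D * f2 * f3 * f12" by (simp only: h1 h4)
  also have "\<dots> = (D * f12) * f2 * f3" by (simp add: ac_simps)
  also have "\<dots> = f6 * f2 * f3" by (simp add: h5)
  finally have L: "(nQ * f2 ^ 2 * f6) * (A * B * C * f12) = f6 * f2 * f3" .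
  have "(f3 * f4) * (A * B * C * f12) = f3 * (A * f4) * (B * C) * f12" by (simp add: ac_simps)
  also have "\<dots> = f3 * f2 * D * f12" by (simp only: h2 h3)
  also have "\<dots> = (D * f12) * f2 * f3" by (simp add: ac_simps)
  also have "\<dots> = f6 * f2 * f3" by (simp add: h5)
  finally have R: "(f3 * f4) * (A * B * C * f12) = f6 * f2 * f3" .
  have "(nQ * f2 ^ 2 * f6) * (A * B * C * f12) = (f3 * f4) * (A * B * C * f12)" by (simp only: L R)
  then show ?thesis by (simp only: mult_right_cancel[OF nz])
qed

definition Sp :: "nat \<Rightarrow> nat set" where "Sp k = {j. even k \<longrightarrow> j \<noteq> 1}"
definition Sq :: "nat \<Rightarrow> nat set" where "Sq k = {j. odd k \<longrightarrow> j \<noteq> 1}"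

lemma pend_eq: "pend n = card {A \<in> partitions n. \<forall>k. count A k \<in> Sp k}"
  unfolding pend_def Sp_def by simp

lemma pond_eq: "pond n = card {A \<in> partitions n. \<forall>k. count A k \<in> Sq k}"
  unfolding pond_def Sq_def by simp

lemma Sp0: "\<forall>k. 0 \<in> Sp k" by (simp add: Sp_def)
lemma Sq0: "\<forall>k. 0 \<in> Sq k" by (simp add: Sq_def)

lemma negf_Abs: "Abs_fps (\<lambda>n. (-1) ^ n * real (f n)) = negf (Abs_fps (\<lambda>n. real (f n)))"
  by (simp add: negf_def)

lemma pend_prod:
  "PP (gS Sp) * PP (\<lambda>k. if odd k then 1 - X ^ (1 * k) else 1)
     * PP (\<lambda>k. if even k then 1 - X ^ (2 * k) else 1) * PP (\<lambda>k. if even k then 1 - X ^ (3 * k) else 1)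
   = PP (\<lambda>k. if even k then 1 - X ^ (6 * k) else 1)"
proof -
  have "PP (gS Sp) * PP (\<lambda>k. if odd k then 1 - X ^ (1 * k) else 1)
     * PP (\<lambda>k. if even k then 1 - X ^ (2 * k) else 1) * PP (\<lambda>k. if even k then 1 - X ^ (3 * k) else 1)
     = PP (\<lambda>k. gS Sp k * (if odd k then 1 - X ^ (1 * k) else 1)
     * (if even k then 1 - X ^ (2 * k) else 1) * (if even k then 1 - X ^ (3 * k) else 1))"
    by (rule PP4[OF good_gS[OF Sp0] good_odd1 good_evn good_evn]) simp_all
  also have "\<dots> = PP (\<lambda>k. if even k then 1 - X ^ (6 * k) else 1)"
  proof (rule PP_cong)
    fix k :: nat assume k: "k \<ge> 1"
    show "gS Sp k * (if odd k then 1 - X ^ (1 * k) else 1)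
     * (if even k then 1 - X ^ (2 * k) else 1) * (if even k then 1 - X ^ (3 * k) else 1)
       = (if even k then 1 - X ^ (6 * k) else 1)"
    proof (cases "even k")
      case True
      have "gS Sp k = u k - X ^ k" by (rule gS_no1[OF k]) (use True in \<open>simp add: Sp_def\<close>)
      moreover have "(u k - X ^ k) * (1 - (X ^ k) ^ 2) * (1 - (X ^ k) ^ 3) = 1 - (X ^ k) ^ 6"
        by (rule ring6) (rule u_inv[OF k])
      ultimately show ?thesis using True by (simp add: Xpow)
    next
      case False
      have "gS Sp k = u k" by (rule gS_full) (use False in \<open>simp add: Sp_def\<close>)
      then show ?thesis using False u_inv[OF k] by simp
    qed
  qed
  finally show ?thesis .
qed

lemma pond_prod:
  "PP (gS Sq) * PP (\<lambda>k. if even k then 1 - X ^ (1 * k) else 1)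
     * PP (\<lambda>k. if odd k then 1 - X ^ (2 * k) else 1) * PP (\<lambda>k. if odd k then 1 - X ^ (3 * k) else 1)
   = PP (\<lambda>k. if odd k then 1 - X ^ (6 * k) else 1)"
proof -
  have "PP (gS Sq) * PP (\<lambda>k. if even k then 1 - X ^ (1 * k) else 1)
     * PP (\<lambda>k. if odd k then 1 - X ^ (2 * k) else 1) * PP (\<lambda>k. if odd k then 1 - X ^ (3 * k) else 1)
     = PP (\<lambda>k. gS Sq k * (if even k then 1 - X ^ (1 * k) else 1)
     * (if odd k then 1 - X ^ (2 * k) else 1) * (if odd k then 1 - X ^ (3 * k) else 1))"
    by (rule PP4[OF good_gS[OF Sq0] good_evn good_oddn good_oddn]) simp_all
  also have "\<dots> = PP (\<lambda>k. if odd k then 1 - X ^ (6 * k) else 1)"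
  proof (rule PP_cong)
    fix k :: nat assume k: "k \<ge> 1"
    show "gS Sq k * (if even k then 1 - X ^ (1 * k) else 1)
     * (if odd k then 1 - X ^ (2 * k) else 1) * (if odd k then 1 - X ^ (3 * k) else 1)
       = (if odd k then 1 - X ^ (6 * k) else 1)"
    proof (cases "odd k")
      case True
      have "gS Sq k = u k - X ^ k" by (rule gS_no1[OF k]) (use True in \<open>simp add: Sq_def\<close>)
      moreover have "(u k - X ^ k) * (1 - (X ^ k) ^ 2) * (1 - (X ^ k) ^ 3) = 1 - (X ^ k) ^ 6"
        by (rule ring6) (rule u_inv[OF k])
      ultimately show ?thesis using True by (simp add: Xpow)
    next
      case False
      have "gS Sq k = u k" by (rule gS_full) (use False in \<open>simp add: Sq_def\<close>)
      then show ?thesis using False u_inv[OF k] by simp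
    qed
  qed
  finally show ?thesis .
qed



theorem theorem2p3:
  shows "Abs_fps (\<lambda>n. (-1) ^ n * real (pend n)) = fq 1 * fq 12 / (fq 2 ^ 2 * fq 6) \<and>
         Abs_fps (\<lambda>n. (-1) ^ n * real (pond n)) = fq 3 * fq 4 / (fq 2 ^ 2 * fq 6)"
proof
  have f4: "fq 4 = PP (\<lambda>k. if even k then 1 - X ^ (2 * k) else 1)"
    using fq_even[of 2] by simp
  have f6: "fq 6 = PP (\<lambda>k. if even k then 1 - X ^ (3 * k) else 1)"
    using fq_even[of 3] by simp
  have f12: "fq 12 = PP (\<lambda>k. if even k then 1 - X ^ (6 * k) else 1)"
    using fq_even[of 6] by simp
  have f2: "fq 2 = PP (\<lambda>k. if even k then 1 - X ^ (1 * k) else 1)"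
    using fq_even[of 1] by simp
  have den: "(fq 2 ^ 2 * fq 6) \<diamond> 0 \<noteq> 0" by (simp add: fq_0)
  have P: "Abs_fps (\<lambda>n. (-1) ^ n * real (pend n)) = negf (PP (gS Sp))"
    unfolding negf_Abs using PP_gS[OF Sp0] pend_eq by simp
  have n1: "negf (PP (\<lambda>k. if odd k then 1 - X ^ (1 * k) else 1)) = PP (\<lambda>k. if odd k then 1 + X ^ (1 * k) else 1)"
    unfolding negf_Pi by (rule PP_cong) (simp add: negf_1mX negf_1)
  have n2: "negf (PP (\<lambda>k. if even k then 1 - X ^ (2 * k) else 1)) = fq 4"
    unfolding negf_Pi f4 by (rule PP_cong) (simp add: negf_1mX negf_1)
  have n3: "negf (PP (\<lambda>k. if even k then 1 - X ^ (3 * k) else 1)) = fq 6"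
    unfolding negf_Pi f6 by (rule PP_cong) (simp add: negf_1mX negf_1)
  have n4: "negf (PP (\<lambda>k. if even k then 1 - X ^ (6 * k) else 1)) = fq 12"
    unfolding negf_Pi f12 by (rule PP_cong) (simp add: negf_1mX negf_1)
  have h1: "negf (PP (gS Sp)) * PP (\<lambda>k. if odd k then 1 + X ^ (1 * k) else 1) * fq 4 * fq 6 = fq 12"
    using arg_cong[OF pend_prod, of negf] unfolding negf_mult n1 n2 n3 n4 .
  have h2: "PP (\<lambda>k. if odd k then 1 + X ^ (1 * k) else 1) * PP (\<lambda>k. if odd k then 1 - X ^ (1 * k) else 1)
     = PP (\<lambda>k. if odd k then 1 - X ^ (2 * k) else 1)"
    by (rule BC_r) simp_all
  have h3: "PP (\<lambda>k. if odd k then 1 - X ^ (2 * k) else 1) * fq 4 = fq 2"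
    using odd_even_r[of 2] by simp
  have h4: "PP (\<lambda>k. if odd k then 1 - X ^ (1 * k) else 1) * fq 2 = fq 1"
    using odd_even_r[of 1] by simp
  have "negf (PP (gS Sp)) * fq 2 ^ 2 * fq 6 = fq 1 * fq 12"
    by (rule ring_pend[OF h1 h2 h3 h4])
  then have "negf (PP (gS Sp)) * (fq 2 ^ 2 * fq 6) = fq 1 * fq 12" by (simp add: mult.assoc)
  then show "Abs_fps (\<lambda>n. (-1) ^ n * real (pend n)) = fq 1 * fq 12 / (fq 2 ^ 2 * fq 6)"
    unfolding P by (rule divI[OF den])
next
  have f4: "fq 4 = PP (\<lambda>k. if even k then 1 - X ^ (2 * k) else 1)"
    using fq_even[of 2] by simp
  have f2: "fq 2 = PP (\<lambda>k. if even k then 1 - X ^ (1 * k) else 1)"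
    using fq_even[of 1] by simp
  have den: "(fq 2 ^ 2 * fq 6) \<diamond> 0 \<noteq> 0" by (simp add: fq_0)
  have Q: "Abs_fps (\<lambda>n. (-1) ^ n * real (pond n)) = negf (PP (gS Sq))"
    unfolding negf_Abs using PP_gS[OF Sq0] pond_eq by simp
  have n1: "negf (PP (\<lambda>k. if even k then 1 - X ^ (1 * k) else 1)) = fq 2"
    unfolding negf_Pi f2 by (rule PP_cong) (simp add: negf_1mX negf_1)
  have n2: "negf (PP (\<lambda>k. if odd k then 1 - X ^ (2 * k) else 1)) = PP (\<lambda>k. if odd k then 1 - X ^ (2 * k) else 1)"
    unfolding negf_Pi by (rule PP_cong) (simp add: negf_1mX negf_1)
  have n3: "negf (PP (\<lambda>k. if odd k then 1 - X ^ (3 * k) else 1)) = PP (\<lambda>k. if odd k then 1 + X ^ (3 * k) else 1)"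
    unfolding negf_Pi by (rule PP_cong) (simp add: negf_1mX negf_1)
  have n4: "negf (PP (\<lambda>k. if odd k then 1 - X ^ (6 * k) else 1)) = PP (\<lambda>k. if odd k then 1 - X ^ (6 * k) else 1)"
    unfolding negf_Pi by (rule PP_cong) (simp add: negf_1mX negf_1)
  have h1: "negf (PP (gS Sq)) * fq 2 * PP (\<lambda>k. if odd k then 1 - X ^ (2 * k) else 1)
      * PP (\<lambda>k. if odd k then 1 + X ^ (3 * k) else 1) = PP (\<lambda>k. if odd k then 1 - X ^ (6 * k) else 1)"
    using arg_cong[OF pond_prod, of negf] unfolding negf_mult n1 n2 n3 n4 .
  have h2: "PP (\<lambda>k. if odd k then 1 - X ^ (2 * k) else 1) * fq 4 = fq 2"
    using odd_even_r[of 2] by simp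
  have h3: "PP (\<lambda>k. if odd k then 1 + X ^ (3 * k) else 1) * PP (\<lambda>k. if odd k then 1 - X ^ (3 * k) else 1)
     = PP (\<lambda>k. if odd k then 1 - X ^ (6 * k) else 1)"
    by (rule BC_r) simp_all
  have h4: "PP (\<lambda>k. if odd k then 1 - X ^ (3 * k) else 1) * fq 6 = fq 3"
    using odd_even_r[of 3] by simp
  have h5: "PP (\<lambda>k. if odd k then 1 - X ^ (6 * k) else 1) * fq 12 = fq 6"
    using odd_even_r[of 6] by simp
  have nz: "PP (\<lambda>k. if odd k then 1 - X ^ (2 * k) else 1) * PP (\<lambda>k. if odd k then 1 + X ^ (3 * k) else 1)
      * PP (\<lambda>k. if odd k then 1 - X ^ (3 * k) else 1) * fq 12 \<noteq> 0" (is "?L \<noteq> 0")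
  proof
    have c: "?L \<diamond> 0 = 1" by (simp add: fq_0)
    assume "?L = 0"
    with c show False by simp
  qed
  have "negf (PP (gS Sq)) * fq 2 ^ 2 * fq 6 = fq 3 * fq 4"
    by (rule ring_pond[OF h1 h2 h3 h4 h5 nz])
  then have "negf (PP (gS Sq)) * (fq 2 ^ 2 * fq 6) = fq 3 * fq 4" by (simp add: mult.assoc)
  then show "Abs_fps (\<lambda>n. (-1) ^ n * real (pond n)) = fq 3 * fq 4 / (fq 2 ^ 2 * fq 6)"
    unfolding Q by (rule divI[OF den])
qed

end
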